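(* Let all parameters $k_a,k_{epo},V_{max},K_M,V_1,k_{23},k_{32},BSL,k_{in},S_{max},SC_{50},N_P,T_P,N_R,T_R$ be positive, with $V_{max}>k_{epo}$ and $N_P$ even. Consider the autonomous (post-dose) P\'erez-Ruixo system with $C(t)=BSL+A_2(t)/V_1$, $V_e(t)=\frac{S_{max}C(t)}{SC_{50}+C(t)}\frac{N_P}{T_P}$: $$A_1'=-k_aA_1,\quad A_2'=k_{epo}-\frac{V_{max}A_2/V_1}{K_M+A_2/V_1},\quad A_3'=k_{23}A_2-k_{32}A_3,$$ $$P_1'=k_{in}-V_e(t)P_1,\quad P_i'=V_e(t)(P_{i-1}-P_i)\ (2\le i\le N_P/2),\quad P_{N_P/2+1}'=V_e(t)P_{N_P/2}-\tfrac{N_P}{T_P}P_{N_P/2+1},$$ $$P_i'=\tfrac{N_P}{T_P}(P_{i-1}-P_i)\ (N_P/2+2\le i\le N_P),\quad R_1'=\tfrac{N_P}{T_P}P_{N_P}-\tfrac{N_R}{T_R}R_1,\quad R_i'=\tfrac{N_R}{T_R}(R_{i-1}-R_i)\ (2\le i\le N_R).$$ Its homeostatic equilibrium, given by $A_1^*=0$, $A_2^*=\frac{V_1k_{epo}K_M}{V_{max}-k_{epo}}$, $A_3^*=\frac{k_{23}}{k_{32}}A_2^*$, $C^*=BSL+A_2^*/V_1$, $P_1^*=\frac{k_{in}(SC_{50}+C^* )}{S_{max}C^*}\frac{T_P}{N_P}$ (and the corresponding transit compartment values), is locally asymptotically stable.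
   Context: $A_1,A_2,A_3$ are EPO amounts in depot, central and peripheral compartments; $P_i$ erythrocyte progenitor transit compartments; $R_i$ reticulocyte transit compartments. *)

theory Defs
  imports "HOL-Analysis.Analysis"
begin

record epo_par =
  ka :: real  kepo :: real  Vmax :: real  KM :: real  V1 :: real
  k23 :: real  k32 :: real  BSL :: real  kin :: real  Smax :: real
  SC50 :: real  NP :: nat  TP :: real  NR :: nat  TR :: real

text \<open>State vectors are functions nat => real; only the first
  3 + NP + NR coordinates are meaningful. Layout:
  index 0 = A1, 1 = A2, 2 = A3, 2+i = P_i (1 <= i <= NP),
  2+NP+i = R_i (1 <= i <= NR).\<close>

definition state_dim :: "epo_par \<Rightarrow> nat" where
  "state_dim p = 3 + NP p + NR p"

definition conc :: "epo_par \<Rightarrow> (nat \<Rightarrow> real) \<Rightarrow> real" where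
  "conc p x = BSL p + x 1 / V1 p"

definition Ve :: "epo_par \<Rightarrow> (nat \<Rightarrow> real) \<Rightarrow> real" where
  "Ve p x = (Smax p * conc p x / (SC50 p + conc p x)) * (real (NP p) / TP p)"

definition epo_field :: "epo_par \<Rightarrow> (nat \<Rightarrow> real) \<Rightarrow> nat \<Rightarrow> real" where
  "epo_field p x j =
    (let h = NP p div 2; kp = real (NP p) / TP p; kr = real (NR p) / TR p;
         P = (\<lambda>i. x (2 + i)); R = (\<lambda>i. x (2 + NP p + i)) in
     if j = 0 then - ka p * x 0
     else if j = 1 then kepo p - (Vmax p * x 1 / V1 p) / (KM p + x 1 / V1 p)
     else if j = 2 then k23 p * x 1 - k32 p * x 2
     else if j \<le> 2 + NP p then
       (let i = j - 2 in
        if i = 1 then kin p - Ve p x * P 1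
        else if i \<le> h then Ve p x * (P (i - 1) - P i)
        else if i = h + 1 then Ve p x * P h - kp * P (h + 1)
        else kp * (P (i - 1) - P i))
     else if j \<le> 2 + NP p + NR p then
       (let i = j - (2 + NP p) in
        if i = 1 then kp * P (NP p) - kr * R 1
        else kr * (R (i - 1) - R i))
     else 0)"

definition A2_eq :: "epo_par \<Rightarrow> real" where
  "A2_eq p = V1 p * kepo p * KM p / (Vmax p - kepo p)"

definition C_eq :: "epo_par \<Rightarrow> real" where
  "C_eq p = BSL p + A2_eq p / V1 p"

definition P1_eq :: "epo_par \<Rightarrow> real" where
  "P1_eq p = kin p * (SC50 p + C_eq p) / (Smax p * C_eq p) * (TP p / real (NP p))"

definition epo_eq :: "epo_par \<Rightarrow> nat \<Rightarrow> real" where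
  "epo_eq p j =
    (if j = 0 then 0
     else if j = 1 then A2_eq p
     else if j = 2 then k23 p / k32 p * A2_eq p
     else if j \<le> 2 + NP p div 2 then P1_eq p
     else if j \<le> 2 + NP p then kin p * TP p / real (NP p)
     else if j \<le> 2 + NP p + NR p then kin p * TR p / real (NR p)
     else 0)"

definition distn :: "nat \<Rightarrow> (nat \<Rightarrow> real) \<Rightarrow> (nat \<Rightarrow> real) \<Rightarrow> real" where
  "distn n x y = sqrt (\<Sum>i<n. (x i - y i)\<^sup>2)"

definition is_solution ::
  "nat \<Rightarrow> ((nat \<Rightarrow> real) \<Rightarrow> nat \<Rightarrow> real) \<Rightarrow> real set \<Rightarrow> (real \<Rightarrow> nat \<Rightarrow> real) \<Rightarrow> bool" where
  "is_solution n f I x \<longleftrightarrow>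
     (\<forall>i<n. \<forall>t\<in>I. ((\<lambda>s. x s i) has_real_derivative f (x t) i) (at t within I))"

definition loc_asym_stable ::
  "nat \<Rightarrow> ((nat \<Rightarrow> real) \<Rightarrow> nat \<Rightarrow> real) \<Rightarrow> (nat \<Rightarrow> real) \<Rightarrow> bool" where
  "loc_asym_stable n f e \<longleftrightarrow>
     (\<forall>i<n. f e i = 0) \<and>
     (\<forall>\<epsilon>>0. \<exists>\<delta>>0. \<forall>x0. distn n x0 e < \<delta> \<longrightarrow>
        (\<exists>x. is_solution n f {0..} x \<and> (\<forall>i<n. x 0 i = x0 i)) \<and>
        (\<forall>T>0. \<forall>x. is_solution n f {0..<T} x \<and> (\<forall>i<n. x 0 i = x0 i) \<longrightarrow>
           (\<forall>t\<in>{0..<T}. distn n (x t) e < \<epsilon>))) \<and>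
     (\<exists>\<delta>>0. \<forall>x. is_solution n f {0..} x \<and> distn n (x 0) e < \<delta> \<longrightarrow>
        ((\<lambda>t. distn n (x t) e) \<longlongrightarrow> 0) at_top)"

end

theory Submission
  imports Defs "HOL-Real_Asymp.Real_Asymp"
begin


lemma deriv_interior:
  assumes "(f has_real_derivative D) (at t within {0..<T})" "0 < t" "t < T"
  shows "(f has_real_derivative D) (at t)"
proof -
  have "at t within {0..<T} = at t"
    by (rule at_within_open_subset[of _ "{0<..<T}"]) (use assms in auto)
  with assms show ?thesis by simp
qed

lemma trap:
  fixes f f' :: "real \<Rightarrow> real"
  assumes der: "\<And>t. t \<in> {0..<T} \<Longrightarrow> (f has_real_derivative f' t) (at t within {0..<T})"
  and f0: "f 0 \<le> B" and BB: "B < B'"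
  and neg: "\<And>t. t \<in> {0..<T} \<Longrightarrow> B < f t \<Longrightarrow> f t < B' \<Longrightarrow> f' t \<le> 0"
  shows "\<forall>t\<in>{0..<T}. f t \<le> B"
proof (rule ccontr)
  assume "\<not> ?thesis"
  then obtain t1 where t1: "t1 \<in> {0..<T}" "f t1 > B" by auto
  have cont: "continuous_on {0..<T} f" by (rule DERIV_continuous_on[OF der])
  have cont1: "continuous_on {0..t1} f" using t1 by (auto intro: continuous_on_subset[OF cont])
  define S where "S = {0..t1} \<inter> f -` {..B}"
  have clS: "closed S" unfolding S_def by (rule continuous_closed_preimage[OF cont1]) auto
  have "0 \<in> S" using f0 t1 by (auto simp: S_def)
  have bS: "bdd_above S" unfolding S_def by (auto intro: bdd_aboveI[of _ t1])
  define s where "s = Sup S"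
  have sS: "s \<in> S" unfolding s_def using closed_contains_Sup[OF _ bS clS] \<open>0 \<in> S\<close> by auto
  have s_le: "\<And>z. z \<in> S \<Longrightarrow> z \<le> s" unfolding s_def using bS by (auto intro: cSup_upper)
  have fs: "f s \<le> B" "0 \<le> s" "s \<le> t1" using sS by (auto simp: S_def)
  have after: "\<And>z. s < z \<Longrightarrow> z \<le> t1 \<Longrightarrow> B < f z"
  proof -
    fix z assume z: "s < z" "z \<le> t1"
    show "B < f z"
    proof (rule ccontr)
      assume "\<not> B < f z"
      then have "z \<in> S" using z fs by (auto simp: S_def)
      with s_le z show False by force
    qed
  qed
  define m where "m = min (f t1) ((B + B') / 2)"
  have m: "B < m" "m < B'" "m \<le> f t1" using t1 BB unfolding m_def by (auto simp: min_def)
  have cont2: "continuous_on {s..t1} f" using fs by (auto intro: continuous_on_subset[OF cont1])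
  define Q where "Q = {s..t1} \<inter> f -` {m..}"
  have clQ: "closed Q" unfolding Q_def by (rule continuous_closed_preimage[OF cont2]) auto
  have "t1 \<in> Q" using m fs by (auto simp: Q_def)
  have bQ: "bdd_below Q" unfolding Q_def by (auto intro: bdd_belowI[of _ s])
  define q where "q = Inf Q"
  have qQ: "q \<in> Q" unfolding q_def using closed_contains_Inf[OF _ bQ clQ] \<open>t1 \<in> Q\<close> by auto
  have q_le: "\<And>z. z \<in> Q \<Longrightarrow> q \<le> z" unfolding q_def using bQ by (auto intro: cInf_lower)
  have fq: "m \<le> f q" "s \<le> q" "q \<le> t1" using qQ by (auto simp: Q_def)
  have sq: "s < q" using fq fs m by (cases "s = q") auto
  have before: "\<And>z. s \<le> z \<Longrightarrow> z < q \<Longrightarrow> f z < m"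
  proof -
    fix z assume z: "s \<le> z" "z < q"
    show "f z < m"
    proof (rule ccontr)
      assume "\<not> f z < m"
      then have "z \<in> Q" using z fq by (auto simp: Q_def)
      with q_le z show False by force
    qed
  qed
  have cont3: "continuous_on {s..q} f" using fq by (auto intro: continuous_on_subset[OF cont2])
  have dif: "\<And>z. s < z \<Longrightarrow> z < q \<Longrightarrow> (f has_real_derivative f' z) (at z)"
    using fs fq t1 by (intro deriv_interior[OF der]) auto
  obtain l z where lz: "s < z" "z < q" "DERIV f z :> l" "f q - f s = (q - s) * l"
    using MVT[OF sq cont3] dif real_differentiable_def by blast
  have "l = f' z" using DERIV_unique[OF lz(3) dif[OF lz(1,2)]] .
  moreover have "f' z \<le> 0"
    using neg[of z] after[of z] before[of z] lz fs fq t1 m by auto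
  ultimately have "f q - f s \<le> 0" using lz sq by (simp add: mult_nonneg_nonpos)
  then show False using fq fs m by linarith
qed

lemma deriv_interior2:
  assumes "(f has_real_derivative D) (at t within {0..})" "0 < t"
  shows "(f has_real_derivative D) (at t)"
proof -
  have "at t within {0..} = at t"
    by (rule at_within_open_subset[of _ "{0<..}"]) (use assms in auto)
  with assms show ?thesis by simp
qed

lemma scalar_bound:
  fixes y D :: "real \<Rightarrow> real"
  assumes der: "\<And>t. t \<in> {0..<T} \<Longrightarrow> (y has_real_derivative D t) (at t within {0..<T})"
  and ineq: "\<And>t. t \<in> {0..<T} \<Longrightarrow> y t * D t \<le> \<bar>y t\<bar> * \<Phi> - d0 * (y t)\<^sup>2"
  and d0: "d0 > 0" and Phi: "\<Phi> \<ge> 0"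
  shows "\<forall>t\<in>{0..<T}. \<bar>y t\<bar> \<le> max \<bar>y 0\<bar> (\<Phi> / d0)"
proof -
  define M where "M = max \<bar>y 0\<bar> (\<Phi> / d0)"
  have M0: "M \<ge> 0" by (simp add: M_def)
  have der2: "\<And>t. t \<in> {0..<T} \<Longrightarrow> ((\<lambda>t. (y t)\<^sup>2) has_real_derivative 2 * y t * D t) (at t within {0..<T})"
    by (auto intro!: derivative_eq_intros der)
  have "\<forall>t\<in>{0..<T}. (y t)\<^sup>2 \<le> M\<^sup>2"
  proof (rule trap[OF der2, of "M\<^sup>2" "M\<^sup>2 + 1"])
    have "\<bar>y 0\<bar> \<le> M" by (simp add: M_def)
    from power_mono[OF this, of 2] show "(y 0)\<^sup>2 \<le> M\<^sup>2" by simp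
    show "M\<^sup>2 < M\<^sup>2 + 1" by simp
    fix t assume t: "t \<in> {0..<T}" and gt: "M\<^sup>2 < (y t)\<^sup>2" "(y t)\<^sup>2 < M\<^sup>2 + 1"
    have "M < \<bar>y t\<bar>"
    proof (rule ccontr)
      assume "\<not> M < \<bar>y t\<bar>"
      then have "\<bar>y t\<bar> \<le> M" by simp
      from power_mono[OF this, of 2] gt show False by simp
    qed
    then have "\<Phi> / d0 < \<bar>y t\<bar>" unfolding M_def by simp
    then have "\<Phi> < d0 * \<bar>y t\<bar>" using d0 by (simp add: divide_less_eq mult.commute)
    then have "\<bar>y t\<bar> * \<Phi> \<le> \<bar>y t\<bar> * (d0 * \<bar>y t\<bar>)" by (intro mult_left_mono) auto
    also have "\<dots> = d0 * (y t)\<^sup>2" by (simp add: power2_eq_square)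
    finally show "2 * y t * D t \<le> 0" using ineq[OF t] by linarith
  qed
  then show ?thesis unfolding M_def[symmetric]
  proof (intro ballI)
    fix t assume "\<forall>t\<in>{0..<T}. (y t)\<^sup>2 \<le> M\<^sup>2" "t \<in> {0..<T}"
    then have "(y t)\<^sup>2 \<le> M\<^sup>2" by auto
    then show "\<bar>y t\<bar> \<le> M" using abs_le_square_iff[of "y t" M] M0 by simp
  qed
qed

lemma scalar_trap:
  fixes y D :: "real \<Rightarrow> real"
  assumes der: "\<And>t. t \<in> {0..<T} \<Longrightarrow> (y has_real_derivative D t) (at t within {0..<T})"
  and ineq: "\<And>t. t \<in> {0..<T} \<Longrightarrow> \<bar>y t\<bar> < \<rho> \<Longrightarrow> y t * D t \<le> 0"
  and y0: "\<bar>y 0\<bar> < \<rho>"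
  shows "\<forall>t\<in>{0..<T}. \<bar>y t\<bar> \<le> \<bar>y 0\<bar>"
proof -
  have der2: "\<And>t. t \<in> {0..<T} \<Longrightarrow> ((\<lambda>t. (y t)\<^sup>2) has_real_derivative 2 * y t * D t) (at t within {0..<T})"
    by (auto intro!: derivative_eq_intros der)
  have "\<forall>t\<in>{0..<T}. (y t)\<^sup>2 \<le> (y 0)\<^sup>2"
  proof (rule trap[OF der2, of "(y 0)\<^sup>2" "\<rho>\<^sup>2"])
    from power_strict_mono[OF y0, of 2] show "(y 0)\<^sup>2 < \<rho>\<^sup>2" by simp
    fix t assume t: "t \<in> {0..<T}" and gt: "(y 0)\<^sup>2 < (y t)\<^sup>2" "(y t)\<^sup>2 < \<rho>\<^sup>2"
    have "\<bar>y t\<bar> < \<rho>"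
    proof (rule ccontr)
      assume "\<not> \<bar>y t\<bar> < \<rho>"
      then have "\<rho> \<le> \<bar>y t\<bar>" by simp
      moreover have "0 \<le> \<rho>" using y0 by linarith
      ultimately show False using power_mono[of \<rho> "\<bar>y t\<bar>" 2] gt by simp
    qed
    then show "2 * y t * D t \<le> 0" using ineq[OF t] by linarith
  qed auto
  then show ?thesis by (simp add: abs_le_square_iff)
qed

lemma decay:
  fixes f f' h :: "real \<Rightarrow> real"
  assumes der: "\<And>t. t \<ge> 0 \<Longrightarrow> (f has_real_derivative f' t) (at t within {0..})"
  and ineq: "\<And>t. t \<ge> 0 \<Longrightarrow> f' t \<le> h t - a * f t"
  and a: "a > 0" and h: "(h \<longlongrightarrow> 0) at_top" and fpos: "\<And>t. f t \<ge> 0"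
  shows "(f \<longlongrightarrow> 0) at_top"
proof (rule order_tendstoI)
  fix e :: real assume "e < 0" then show "eventually (\<lambda>t. e < f t) at_top"
    using fpos by (auto intro: always_eventually less_le_trans)
next
  fix \<epsilon> :: real assume eps: "0 < \<epsilon>"
  have "eventually (\<lambda>t. h t < a * \<epsilon> / 2) at_top"
    using order_tendstoD(2)[OF h, of "a * \<epsilon> / 2"] eps a by (simp add: zero_less_mult_iff)
  then obtain t1 where t1: "\<And>t. t \<ge> t1 \<Longrightarrow> h t < a * \<epsilon> / 2" by (auto simp: eventually_at_top_linorder)
  define t0 where "t0 = max t1 0"
  have t0: "t0 \<ge> 0" "\<And>t. t \<ge> t0 \<Longrightarrow> h t < a * \<epsilon> / 2" using t1 by (auto simp: t0_def)
  define W where "W t = (f t - \<epsilon> / 2) * exp (a * t)" for t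
  have derW: "\<And>t. t \<ge> 0 \<Longrightarrow> (W has_real_derivative (f' t + a * (f t - \<epsilon>/2)) * exp (a * t)) (at t within {0..})"
    unfolding W_def by (auto intro!: derivative_eq_intros der simp: algebra_simps)
  have Wle: "W t \<le> W t0" if t: "t \<ge> t0" for t
  proof (cases "t = t0")
    case False
    then have lt: "t0 < t" using t by simp
    have cW: "continuous_on {0..} W" by (rule DERIV_continuous_on[of _ _ "\<lambda>t. (f' t + a * (f t - \<epsilon>/2)) * exp (a * t)"]) (use derW in auto)
    have cW2: "continuous_on {t0..t} W" using t0 by (auto intro: continuous_on_subset[OF cW])
    have dW: "\<And>z. t0 < z \<Longrightarrow> z < t \<Longrightarrow> (W has_real_derivative (f' z + a * (f z - \<epsilon>/2)) * exp (a * z)) (at z)"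
      using t0 by (intro deriv_interior2[OF derW]) auto
    obtain l z where lz: "t0 < z" "z < t" "DERIV W z :> l" "W t - W t0 = (t - t0) * l"
      using MVT[OF lt cW2] dW real_differentiable_def by blast
    have "l = (f' z + a * (f z - \<epsilon>/2)) * exp (a * z)" using DERIV_unique[OF lz(3) dW[OF lz(1,2)]] .
    moreover have "f' z + a * (f z - \<epsilon>/2) \<le> 0"
    proof -
      have "f' z \<le> h z - a * f z" using ineq[of z] lz t0 by simp
      moreover have "h z < a * \<epsilon> / 2" using t0(2)[of z] lz by simp
      ultimately show ?thesis by (simp add: right_diff_distrib)
    qed
    ultimately have "l \<le> 0" by (simp add: mult_nonpos_nonneg)
    then have "(t - t0) * l \<le> 0" using lt by (simp add: mult_nonneg_nonpos)
    then show ?thesis using lz by linarith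
  qed simp
  define C where "C = f t0 * exp (a * t0)"
  have lim: "((\<lambda>t. C * exp (- a * t)) \<longlongrightarrow> 0) at_top" using a by real_asymp
  have ev: "eventually (\<lambda>t. C * exp (- a * t) < \<epsilon> / 2) at_top"
    using order_tendstoD(2)[OF lim, of "\<epsilon>/2"] eps by simp
  have "eventually (\<lambda>t. t \<ge> t0) at_top" by simp
  with ev show "eventually (\<lambda>t. f t < \<epsilon>) at_top"
  proof eventually_elim
    case (elim t)
    have "(f t - \<epsilon> / 2) * exp (a * t) \<le> (f t0 - \<epsilon> / 2) * exp (a * t0)" using Wle[OF elim(2)] by (simp add: W_def)
    also have "\<dots> \<le> f t0 * exp (a * t0)" using eps by (simp add: mult_right_mono)
    finally have "f t - \<epsilon> / 2 \<le> C / exp (a * t)" by (simp add: C_def pos_le_divide_eq)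
    also have "C / exp (a * t) = C * exp (- a * t)" by (simp add: exp_minus field_simps)
    finally show ?case using elim(1) by linarith
  qed
qed

lemma scalar_decay:
  fixes y D \<Phi> :: "real \<Rightarrow> real"
  assumes der: "\<And>t. t \<ge> 0 \<Longrightarrow> (y has_real_derivative D t) (at t within {0..})"
  and ineq: "\<And>t. t \<ge> 0 \<Longrightarrow> y t * D t \<le> \<bar>y t\<bar> * \<Phi> t - d0 * (y t)\<^sup>2"
  and d0: "d0 > 0" and Phi: "\<And>t. \<Phi> t \<ge> 0" and Phil: "(\<Phi> \<longlongrightarrow> 0) at_top"
  and bnd: "\<And>t. t \<ge> 0 \<Longrightarrow> \<bar>y t\<bar> \<le> M"
  shows "(y \<longlongrightarrow> 0) at_top"
proof -
  have der2: "\<And>t. t \<ge> 0 \<Longrightarrow> ((\<lambda>t. (y t)\<^sup>2) has_real_derivative 2 * y t * D t) (at t within {0..})"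
    by (auto intro!: derivative_eq_intros der)
  have "((\<lambda>t. (y t)\<^sup>2) \<longlongrightarrow> 0) at_top"
  proof (rule decay[OF der2, of "\<lambda>t. 2 * M * \<Phi> t" "2 * d0"])
    fix t :: real assume t: "t \<ge> 0"
    have "\<bar>y t\<bar> * \<Phi> t \<le> M * \<Phi> t" using bnd[OF t] Phi by (intro mult_right_mono) auto
    then show "2 * y t * D t \<le> 2 * M * \<Phi> t - 2 * d0 * (y t)\<^sup>2" using ineq[OF t] by linarith
  next
    show "((\<lambda>t. 2 * M * \<Phi> t) \<longlongrightarrow> 0) at_top" using tendsto_mult_left[OF Phil, of "2 * M"] by simp
  qed (use d0 in auto)
  then have "((\<lambda>t. sqrt ((y t)\<^sup>2)) \<longlongrightarrow> sqrt 0) at_top" by (rule tendsto_real_sqrt)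
  then have "((\<lambda>t. \<bar>y t\<bar>) \<longlongrightarrow> 0) at_top" by simp
  then show ?thesis by (simp add: tendsto_rabs_zero_iff)
qed

lemma integral_deriv0:
  fixes g :: "real \<Rightarrow> real"
  assumes g: "continuous_on {0..} g" and t: "t \<ge> 0"
  shows "((\<lambda>u. integral {0..u} g) has_real_derivative g t) (at t within {0..})"
proof -
  have "((\<lambda>u. integral {0..u} g) has_real_derivative g t) (at t within {0..t+1})"
    by (rule integral_has_real_derivative) (use t in \<open>auto intro: continuous_on_subset[OF g]\<close>)
  moreover have "at t within {0..t+1} = at t within {0..}"
    by (rule at_within_nhd[of _ "{..<t+1}"]) (use t in auto)
  ultimately show ?thesis by simp
qed

lemma lin_exists:
  fixes b d :: "real \<Rightarrow> real"
  assumes b: "continuous_on {0..} b" and d: "continuous_on {0..} d"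
  shows "\<exists>y. y 0 = y0 \<and> (\<forall>t\<ge>0. (y has_real_derivative b t - d t * y t) (at t within {0..}))"
proof -
  define D where "D u = integral {0..u} d" for u
  have dD: "\<And>t. t \<ge> 0 \<Longrightarrow> (D has_real_derivative d t) (at t within {0..})"
    unfolding D_def by (rule integral_deriv0[OF d])
  have cD: "continuous_on {0..} D" by (rule DERIV_continuous_on[OF dD]) auto
  define g where "g s = b s * exp (D s)" for s
  have cg: "continuous_on {0..} g" unfolding g_def by (intro continuous_intros b cD)
  define I where "I u = integral {0..u} g" for u
  have dI: "\<And>t. t \<ge> 0 \<Longrightarrow> (I has_real_derivative g t) (at t within {0..})"
    unfolding I_def by (rule integral_deriv0[OF cg])
  define y where "y t = (y0 + I t) * exp (- D t)" for t
  have "y 0 = y0" by (simp add: y_def I_def D_def)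
  moreover have "(y has_real_derivative b t - d t * y t) (at t within {0..})" if t: "t \<ge> 0" for t
  proof -
    have "(y has_real_derivative g t * exp (- D t) + (y0 + I t) * (exp (- D t) * (- d t))) (at t within {0..})"
      unfolding y_def by (auto intro!: derivative_eq_intros dI dD t)
    moreover have "g t * exp (- D t) + (y0 + I t) * (exp (- D t) * (- d t)) = b t - d t * y t"
      by (simp add: g_def y_def exp_minus field_simps)
    ultimately show ?thesis by simp
  qed
  ultimately show ?thesis by blast
qed

lemma mm_exists:
  fixes K c e0 :: real
  assumes K: "K > 0" and c: "c > 0" and e0: "\<bar>e0\<bar> < K"
  shows "\<exists>e. e 0 = e0 \<and> (\<forall>t\<ge>0. (e has_real_derivative (- c * e t / (K + e t))) (at t within {0..}) \<and> \<bar>e t\<bar> \<le> \<bar>e0\<bar>)"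
proof (cases "e0 = 0")
  case True
  then show ?thesis by (intro exI[of _ "\<lambda>t. 0"]) auto
next
  case False
  define \<sigma> where "\<sigma> = sgn e0"
  define r0 where "r0 = \<bar>e0\<bar>"
  have r0: "0 < r0" "r0 < K" using False e0 by (auto simp: r0_def)
  have sig: "\<sigma> = 1 \<or> \<sigma> = -1" using False by (auto simp: \<sigma>_def sgn_if)
  have e0s: "e0 = \<sigma> * r0" by (simp add: \<sigma>_def r0_def sgn_mult_abs)
  define Kp where "Kp = (r0 + K) / 2"
  have Kp: "r0 < Kp" "Kp < K" using r0 by (auto simp: Kp_def)
  define H where "H r = K * ln r + \<sigma> * r" for r
  have dH: "\<And>x. x > 0 \<Longrightarrow> (H has_real_derivative (K / x + \<sigma>)) (at x)"
    unfolding H_def by (auto intro!: derivative_eq_intros simp: field_simps)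
  have dHpos: "K / x + \<sigma> > 0" if "0 < x" "x \<le> Kp" for x
  proof -
    have "K / x \<ge> K / Kp" using that K by (intro divide_left_mono) auto
    moreover have "K / Kp > 1" using Kp r0 by simp
    ultimately show ?thesis using sig by auto
  qed
  have Hmono: "H x < H z" if "0 < x" "x < z" "z \<le> Kp" for x z
    by (rule DERIV_pos_imp_increasing[OF that(2)]) (use that dH dHpos in \<open>fastforce\<close>)
  have Hinj: "x = z" if "0 < x" "x \<le> Kp" "0 < z" "z \<le> Kp" "H x = H z" for x z
    using Hmono[of x z] Hmono[of z x] that by (cases x z rule: linorder_cases) auto
  have Hex: "\<exists>x. 0 < x \<and> x < Kp \<and> H x = y" if y: "y < H Kp" for y
  proof -
    define \<epsilon> where "\<epsilon> = min (Kp / 2) (exp ((y - Kp) / K))"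
    have eps: "0 < \<epsilon>" "\<epsilon> < Kp" using Kp r0 by (auto simp: \<epsilon>_def)
    have "ln \<epsilon> \<le> ln (exp ((y - Kp) / K))" using eps
      by (subst ln_le_cancel_iff) (auto simp: \<epsilon>_def)
    then have "ln \<epsilon> \<le> (y - Kp) / K" by simp
    then have "K * ln \<epsilon> \<le> y - Kp" using K by (simp add: pos_le_divide_eq mult.commute)
    moreover have "\<sigma> * \<epsilon> \<le> Kp" using sig eps by auto
    ultimately have "H \<epsilon> \<le> y" by (simp add: H_def)
    moreover have "continuous_on {\<epsilon>..Kp} H"
      using eps by (intro continuous_at_imp_continuous_on ballI DERIV_isCont[OF dH]) auto
    ultimately obtain x where x: "\<epsilon> \<le> x" "x \<le> Kp" "H x = y"
      using IVT'[of H \<epsilon> y Kp] y eps by auto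
    then have "x \<noteq> Kp" using y by auto
    then show ?thesis using x eps by (intro exI[of _ x]) auto
  qed
  define Hinv where "Hinv y = (THE x. 0 < x \<and> x < Kp \<and> H x = y)" for y
  have Hinv: "0 < Hinv y \<and> Hinv y < Kp \<and> H (Hinv y) = y" if yy: "y < H Kp" for y
  proof -
    obtain x where x: "0 < x \<and> x < Kp \<and> H x = y" using Hex[OF yy] by blast
    have "(THE x. 0 < x \<and> x < Kp \<and> H x = y) = x"
      by (rule the_equality) (use x Hinj in \<open>auto\<close>)
    then show ?thesis using x by (simp add: Hinv_def)
  qed
  have HinvH: "Hinv (H z) = z" if "0 < z" "z < Kp" for z
  proof -
    have "H z < H Kp" using Hmono that by auto
    from Hinv[OF this] show ?thesis using Hinj[of "Hinv (H z)" z] that by auto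
  qed
  have dHinv: "(Hinv has_real_derivative inverse (K / Hinv y + \<sigma>)) (at y)" if y: "y < H Kp" for y
  proof -
    define x where "x = Hinv y"
    have x: "0 < x" "x < Kp" "H x = y" using Hinv[OF y] by (auto simp: x_def)
    have cont: "isCont Hinv y"
    proof -
      have "isCont Hinv (H x)"
        by (rule isCont_inverse_function2[of "x/2" x "(x + Kp)/2"])
           (use x in \<open>auto intro!: HinvH DERIV_isCont[OF dH]\<close>)
      then show ?thesis using x by simp
    qed
    have pos: "K / Hinv y + \<sigma> \<noteq> 0" using dHpos[of x] x by (simp add: x_def)
    show ?thesis
      by (rule DERIV_inverse_function[of H, where a="y - 1" and b="H Kp"])
         (use x y pos cont Hinv in \<open>auto simp: x_def intro!: dH\<close>)
  qed
  define r where "r t = Hinv (H r0 - c * t)" for t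
  have HKp: "H r0 < H Kp" using Hmono r0 Kp by auto
  have rt: "0 < r t" "r t \<le> r0" "H (r t) = H r0 - c * t" if t: "t \<ge> 0" for t
  proof -
    have y: "H r0 - c * t < H Kp" using HKp c t by (smt (verit) mult_nonneg_nonneg)
    show "0 < r t" "H (r t) = H r0 - c * t" using Hinv[OF y] by (auto simp: r_def)
    show "r t \<le> r0"
    proof (rule ccontr)
      assume "\<not> r t \<le> r0"
      then have "H r0 < H (r t)" using Hmono[of r0 "r t"] Hinv[OF y] r0 by (auto simp: r_def)
      moreover have "0 \<le> c * t" using c t by simp
      ultimately show False using Hinv[OF y] by (simp add: r_def)
    qed
  qed
  define e where "e t = \<sigma> * r t" for t
  have "e 0 = e0" using HinvH[of r0] r0 Kp by (simp add: e_def r_def e0s)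
  moreover have "(e has_real_derivative (- c * e t / (K + e t))) (at t within {0..}) \<and> \<bar>e t\<bar> \<le> \<bar>e0\<bar>"
    if t: "t \<ge> 0" for t
  proof
    have y: "H r0 - c * t < H Kp" using HKp c t by (smt (verit) mult_nonneg_nonneg)
    have pos: "K / r t + \<sigma> > 0" using dHpos[of "r t"] rt[OF t] Kp by auto
    have dl: "((\<lambda>t. H r0 - c * t) has_real_derivative - c) (at t)"
      by (auto intro!: derivative_eq_intros)
    have "(r has_real_derivative inverse (K / r t + \<sigma>) * (- c)) (at t)"
      using DERIV_chain2[of Hinv _ "\<lambda>t. H r0 - c * t" t, OF dHinv[OF y] dl] unfolding r_def[abs_def] by simp
    then have "(e has_real_derivative \<sigma> * (inverse (K / r t + \<sigma>) * (- c))) (at t)"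
      unfolding e_def by (rule DERIV_cmult)
    moreover have "\<sigma> * (inverse (K / r t + \<sigma>) * (- c)) = - c * e t / (K + e t)"
    proof -
      have rp: "r t > 0" using rt[OF t] by simp
      have "K + \<sigma> * r t \<noteq> 0" using pos rp by (auto simp: field_simps)
      moreover have "\<sigma> * \<sigma> = 1" using sig by auto
      ultimately show ?thesis using rp
        by (simp add: e_def field_simps)
    qed
    ultimately show "(e has_real_derivative (- c * e t / (K + e t))) (at t within {0..})"
      by (auto intro: has_field_derivative_at_within)
    show "\<bar>e t\<bar> \<le> \<bar>e0\<bar>" using rt[OF t] sig by (auto simp: e_def r0_def)
  qed
  ultimately show ?thesis by blast
qed



definition good :: "epo_par \<Rightarrow> bool" where
  "good p \<longleftrightarrow> ka p > 0 \<and> kepo p > 0 \<and> Vmax p > 0 \<and> KM p > 0 \<and> V1 p > 0 \<and>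
    k23 p > 0 \<and> k32 p > 0 \<and> BSL p > 0 \<and> kin p > 0 \<and> Smax p > 0 \<and>
    SC50 p > 0 \<and> NP p > 0 \<and> TP p > 0 \<and> NR p > 0 \<and> TR p > 0 \<and>
    Vmax p > kepo p \<and> even (NP p)"

definition kp :: "epo_par \<Rightarrow> real" where "kp p = real (NP p) / TP p"
definition kr :: "epo_par \<Rightarrow> real" where "kr p = real (NR p) / TR p"
definition hh :: "epo_par \<Rightarrow> nat" where "hh p = NP p div 2"

definition lin_b :: "epo_par \<Rightarrow> nat \<Rightarrow> real" where
  "lin_b p j = (if j = 3 then kin p else 0)"
definition lin_g0 :: "epo_par \<Rightarrow> nat \<Rightarrow> real" where
  "lin_g0 p j = (if j = 2 then k23 p else if j \<le> 3 + hh p then 0 else if j \<le> 3 + NP p then kp p else kr p)"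
definition lin_g1 :: "epo_par \<Rightarrow> nat \<Rightarrow> real" where
  "lin_g1 p j = (if j = 2 \<or> j = 3 then 0 else if j \<le> 3 + hh p then 1 else 0)"
definition lin_d0 :: "epo_par \<Rightarrow> nat \<Rightarrow> real" where
  "lin_d0 p j = (if j = 2 then k32 p else if j \<le> 2 + hh p then 0 else if j \<le> 2 + NP p then kp p else kr p)"
definition lin_d1 :: "epo_par \<Rightarrow> nat \<Rightarrow> real" where
  "lin_d1 p j = (if j = 2 then 0 else if j \<le> 2 + hh p then 1 else 0)"

lemma good_facts:
  assumes "good p"
  shows "ka p > 0" "kepo p > 0" "Vmax p > 0" "KM p > 0" "V1 p > 0"
    "k23 p > 0" "k32 p > 0" "BSL p > 0" "kin p > 0" "Smax p > 0"
    "SC50 p > 0" "NP p > 0" "TP p > 0" "NR p > 0" "TR p > 0"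
    "Vmax p > kepo p" "NP p = 2 * hh p" "hh p \<ge> 1" "kp p > 0" "kr p > 0"
  using assms by (auto simp: good_def hh_def kp_def kr_def elim!: evenE)

lemma field_lin:
  assumes g: "good p" and j: "2 \<le> j" "j < state_dim p"
  shows "epo_field p x j = lin_b p j + (lin_g0 p j + lin_g1 p j * Ve p x) * x (j - 1)
           - (lin_d0 p j + lin_d1 p j * Ve p x) * x j"
proof -
  note G = good_facts[OF g]
  consider "j = 2" | "j = 3" | "4 \<le> j" "j \<le> 2 + hh p" | "j = 3 + hh p" | "4 + hh p \<le> j" "j \<le> 2 + NP p"
    | "j = 3 + NP p" | "4 + NP p \<le> j" "j \<le> 2 + NP p + NR p"
    using j G(17,18) by (force simp: state_dim_def)
  then show ?thesis
  proof cases
    case 1 then show ?thesis by (simp add: epo_field_def lin_b_def lin_g0_def lin_g1_def lin_d0_def lin_d1_def)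
  next
    case 2 then show ?thesis using G(17,18)
      by (simp add: epo_field_def lin_b_def lin_g0_def lin_g1_def lin_d0_def lin_d1_def Let_def eval_nat_numeral)
  next
    case 3
    have f: "j \<noteq> 0" "j \<noteq> 1" "j \<noteq> 2" "j \<noteq> 3" "j \<le> 2 + NP p" "j - 2 \<le> NP p div 2" "j - 2 \<noteq> 1"
      "j \<le> 2 + hh p" "j \<le> 3 + hh p" "2 + (j - 2 - 1) = j - 1" "2 + (j - 2) = j"
      using 3 G(17,18) by auto
    show ?thesis using f
      by (simp add: epo_field_def lin_b_def lin_g0_def lin_g1_def lin_d0_def lin_d1_def Let_def algebra_simps del: One_nat_def)
  next
    case 4
    have f: "j \<noteq> 0" "j \<noteq> 1" "j \<noteq> 2" "j \<noteq> 3" "j \<le> 2 + NP p" "\<not> j - 2 \<le> NP p div 2" "j - 2 \<noteq> 1"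
      "\<not> j \<le> 2 + hh p" "j \<le> 3 + hh p" "j - 2 = NP p div 2 + 1" "2 + NP p div 2 = j - 1" "2 + (NP p div 2 + 1) = j"
      "x (Suc (Suc (1 + NP p div 2))) = x j" "x (Suc (Suc (NP p div 2))) = x (j - 1)"
    proof -
      have a: "Suc (Suc (1 + NP p div 2)) = j" "Suc (Suc (NP p div 2)) = j - 1" using 4 G(17,18) by auto
      show "x (Suc (Suc (1 + NP p div 2))) = x j" "x (Suc (Suc (NP p div 2))) = x (j - 1)"
        by (simp_all only: a)
    qed (use 4 G(17,18) in auto)
    show ?thesis using f
      apply (simp add: epo_field_def lin_b_def lin_g0_def lin_g1_def lin_d0_def lin_d1_def Let_def kp_def algebra_simps del: One_nat_def)
      using f(4) by simp
  next
    case 5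
    have f: "j \<noteq> 0" "j \<noteq> 1" "j \<noteq> 2" "j \<noteq> 3" "j \<le> 2 + NP p" "\<not> j - 2 \<le> NP p div 2" "j - 2 \<noteq> 1"
      "\<not> j \<le> 2 + hh p" "\<not> j \<le> 3 + hh p" "j - 2 \<noteq> NP p div 2 + 1" "2 + (j - 2 - 1) = j - 1" "2 + (j - 2) = j" "j \<le> 3 + NP p"
      using 5 G(17,18) by auto
    show ?thesis using f
      by (simp add: epo_field_def lin_b_def lin_g0_def lin_g1_def lin_d0_def lin_d1_def Let_def kp_def algebra_simps del: One_nat_def)
  next
    case 6
    have f: "j \<noteq> 0" "j \<noteq> 1" "j \<noteq> 2" "j \<noteq> 3" "\<not> j \<le> 2 + NP p" "j \<le> 2 + NP p + NR p"
      "\<not> j \<le> 2 + hh p" "\<not> j \<le> 3 + hh p" "j - (2 + NP p) = 1" "j \<le> 3 + NP p"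
      using 6 G(14,17,18) by auto
    have a: "x (2 + NP p) = x (j - 1)" "x (2 + NP p + 1) = x j"
      by (rule arg_cong[where f=x], use 6 in linarith)+
    have "epo_field p x j = kp p * x (2 + NP p) - kr p * x (2 + NP p + 1)"
      using f by (simp add: epo_field_def Let_def kp_def kr_def del: One_nat_def)
    then have "epo_field p x j = kp p * x (j - 1) - kr p * x j" by (simp only: a)
    then show ?thesis using f by (simp add: lin_b_def lin_g0_def lin_g1_def lin_d0_def lin_d1_def)
  next
    case 7
    have f: "j \<noteq> 0" "j \<noteq> 1" "j \<noteq> 2" "j \<noteq> 3" "\<not> j \<le> 2 + NP p" "j \<le> 2 + NP p + NR p"
      "\<not> j \<le> 2 + hh p" "\<not> j \<le> 3 + hh p" "j - (2 + NP p) \<noteq> 1" "2 + NP p + (j - (2 + NP p) - 1) = j - 1"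
      "2 + NP p + (j - (2 + NP p)) = j" "\<not> j \<le> 3 + NP p"
      using 7 G(14,17,18) by auto
    show ?thesis using f
      by (simp add: epo_field_def lin_b_def lin_g0_def lin_g1_def lin_d0_def lin_d1_def Let_def kr_def algebra_simps del: One_nat_def)
  qed
qed

definition Vf :: "epo_par \<Rightarrow> real \<Rightarrow> real" where
  "Vf p a = Smax p * (BSL p + a / V1 p) / (SC50 p + (BSL p + a / V1 p)) * kp p"
definition us :: "epo_par \<Rightarrow> real" where "us p = A2_eq p"
definition KK :: "epo_par \<Rightarrow> real" where "KK p = V1 p * KM p + us p"
definition cc :: "epo_par \<Rightarrow> real" where "cc p = Vmax p - kepo p"
definition vs :: "epo_par \<Rightarrow> real" where "vs p = Vf p (us p)"
definition Lv :: "epo_par \<Rightarrow> real" where "Lv p = Smax p * kp p / (SC50 p * V1 p)"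
definition rho :: "epo_par \<Rightarrow> real" where
  "rho p = min (KK p / 2) (min (V1 p * C_eq p / 2) (vs p / (2 * Lv p)))"
definition dd :: "epo_par \<Rightarrow> real" where
  "dd p = min (ka p) (min (cc p / (2 * KK p)) (min (k32 p) (min (vs p / 2) (min (kp p) (kr p)))))"
definition Est :: "epo_par \<Rightarrow> real" where
  "Est p = us p + k23 p / k32 p * us p + P1_eq p + kin p * TP p / real (NP p) + kin p * TR p / real (NR p)"
definition gmax :: "epo_par \<Rightarrow> real" where "gmax p = k23 p + 2 * vs p + kp p + kr p"
definition LL :: "epo_par \<Rightarrow> real" where "LL p = 2 * Lv p * Est p + gmax p"

lemma Ve_Vf: "Ve p x = Vf p (x 1)"
  by (simp add: Ve_def Vf_def conc_def kp_def)

lemma basic_pos: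
  assumes g: "good p"
  shows "us p > 0" "C_eq p > 0" "KK p > 0" "cc p > 0" "vs p > 0" "Lv p > 0" "P1_eq p > 0"
    "rho p > 0" "dd p > 0" "Est p > 0" "gmax p > 0" "LL p > 0"
proof -
  note G = good_facts[OF g]
  show u: "us p > 0" using G by (simp add: us_def A2_eq_def)
  have "us p / V1 p > 0" using G u by simp
  then show C: "C_eq p > 0" using G by (simp add: C_eq_def us_def[symmetric])
  have "V1 p * KM p > 0" using G by simp
  then show K: "KK p > 0" using u by (simp add: KK_def)
  show c: "cc p > 0" using G by (simp add: cc_def)
  have "BSL p + us p / V1 p = C_eq p" by (simp add: C_eq_def us_def)
  then show v: "vs p > 0" using G C by (simp add: vs_def Vf_def)
  show L: "Lv p > 0" using G by (simp add: Lv_def)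
  show P: "P1_eq p > 0" using G C by (simp add: P1_eq_def)
  show "rho p > 0" using G C K v L by (simp add: rho_def)
  show "dd p > 0" using G K c v by (simp add: dd_def)
  show E: "Est p > 0" using G u P by (simp add: Est_def add_pos_nonneg)
  show gm: "gmax p > 0" using G v by (simp add: gmax_def)
  have "2 * Lv p * Est p > 0" using E L by simp
  then show "LL p > 0" unfolding LL_def by (rule add_pos_pos[OF _ gm])
qed

lemma Vf_lip:
  assumes g: "good p" and C: "BSL p + a / V1 p \<ge> 0"
  shows "\<bar>Vf p a - vs p\<bar> \<le> Lv p * \<bar>a - us p\<bar>"
proof -
  note G = good_facts[OF g]
  define C where "C = BSL p + a / V1 p"
  define Cs where "Cs = BSL p + us p / V1 p"
  have Cs: "Cs > 0" using basic_pos[OF g] by (simp add: Cs_def C_eq_def us_def)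
  have C0: "C \<ge> 0" using assms by (simp add: C_def)
  define S where "S = SC50 p"
  have S: "S > 0" using G by (simp add: S_def)
  have eq: "C / (S + C) - Cs / (S + Cs) = S * (C - Cs) / ((S + C) * (S + Cs))"
    using S C0 Cs by (simp add: field_simps)
  have den: "(S + C) * (S + Cs) \<ge> S * S" using S C0 Cs by (intro mult_mono) auto
  have "\<bar>C / (S + C) - Cs / (S + Cs)\<bar> = S * \<bar>C - Cs\<bar> / ((S + C) * (S + Cs))"
    using S C0 Cs by (simp add: eq abs_mult abs_divide)
  also have "\<dots> \<le> S * \<bar>C - Cs\<bar> / (S * S)"
    using S C0 Cs den by (intro divide_left_mono) auto
  also have "\<dots> = \<bar>C - Cs\<bar> / S" using S by simp
  finally have b1: "\<bar>C / (S + C) - Cs / (S + Cs)\<bar> \<le> \<bar>C - Cs\<bar> / S" .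
  have "Vf p a - vs p = Smax p * kp p * (C / (S + C) - Cs / (S + Cs))"
    by (simp add: Vf_def vs_def C_def Cs_def S_def algebra_simps)
  then have "\<bar>Vf p a - vs p\<bar> = Smax p * kp p * \<bar>C / (S + C) - Cs / (S + Cs)\<bar>"
    using G by (simp add: abs_mult)
  also have "\<dots> \<le> Smax p * kp p * (\<bar>C - Cs\<bar> / S)"
    using G b1 by (intro mult_left_mono) auto
  also have "\<bar>C - Cs\<bar> = \<bar>a - us p\<bar> / V1 p" using G by (simp add: C_def Cs_def diff_divide_distrib[symmetric] abs_divide)
  finally show ?thesis using G S by (simp add: Lv_def S_def field_simps)
qed

lemma Vf_near:
  assumes g: "good p" and a: "\<bar>a - us p\<bar> \<le> rho p"
  shows "BSL p + a / V1 p > 0" "\<bar>Vf p a - vs p\<bar> \<le> Lv p * \<bar>a - us p\<bar>" "vs p / 2 \<le> Vf p a" "Vf p a \<le> 2 * vs p"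
proof -
  note G = good_facts[OF g] and P = basic_pos[OF g]
  have r1: "\<bar>a - us p\<bar> \<le> V1 p * C_eq p / 2" "\<bar>a - us p\<bar> \<le> vs p / (2 * Lv p)"
    using a by (auto simp: rho_def)
  have "\<bar>a / V1 p - us p / V1 p\<bar> \<le> C_eq p / 2"
    using r1(1) G by (simp add: diff_divide_distrib[symmetric] abs_divide divide_le_eq mult.commute)
  then have h2: "us p / V1 p - a / V1 p \<le> C_eq p / 2" using abs_le_D2 by fastforce
  have "C_eq p = BSL p + us p / V1 p" by (simp add: C_eq_def us_def)
  then show C: "BSL p + a / V1 p > 0" using P(2) h2 by linarith
  show l: "\<bar>Vf p a - vs p\<bar> \<le> Lv p * \<bar>a - us p\<bar>" using Vf_lip[OF g] C by simp
  have "Lv p * \<bar>a - us p\<bar> \<le> Lv p * (vs p / (2 * Lv p))" using r1(2) P by (intro mult_left_mono) auto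
  also have "\<dots> = vs p / 2" using P by simp
  finally have "\<bar>Vf p a - vs p\<bar> \<le> vs p / 2" using l by linarith
  then have "Vf p a - vs p \<le> vs p / 2" "- (Vf p a - vs p) \<le> vs p / 2" by (rule abs_le_D1, rule abs_le_D2)
  then show "vs p / 2 \<le> Vf p a" "Vf p a \<le> 2 * vs p" using P by linarith+
qed

lemma aux_cancel: "A \<noteq> 0 \<Longrightarrow> B \<noteq> 0 \<Longrightarrow> A / B * (k * B / A) = (k::real)"
  by (simp add: field_simps)

lemma eq_identities:
  assumes g: "good p"
  shows "vs p * P1_eq p = kin p" "kp p * (kin p * TP p / real (NP p)) = kin p"
    "kr p * (kin p * TR p / real (NR p)) = kin p" "Ve p (epo_eq p) = vs p" "epo_eq p 1 = us p"
proof -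
  note G = good_facts[OF g] and P = basic_pos[OF g]
  have "BSL p + us p / V1 p = C_eq p" by (simp add: C_eq_def us_def)
  then have vsC: "vs p = Smax p * C_eq p / (SC50 p + C_eq p) * kp p" by (simp add: vs_def Vf_def)
  have nz: "C_eq p \<noteq> 0" "SC50 p + C_eq p \<noteq> 0" "Smax p \<noteq> 0" "real (NP p) \<noteq> 0" "TP p \<noteq> 0"
    using G P by auto
  have e1: "Smax p * C_eq p / (SC50 p + C_eq p) * (kin p * (SC50 p + C_eq p) / (Smax p * C_eq p)) = kin p"
    using aux_cancel[of "Smax p * C_eq p" "SC50 p + C_eq p" "kin p"] nz by simp
  have e2: "kp p * (TP p / real (NP p)) = 1" using nz by (simp add: kp_def)
  have "vs p * P1_eq p = (Smax p * C_eq p / (SC50 p + C_eq p) * (kin p * (SC50 p + C_eq p) / (Smax p * C_eq p))) * (kp p * (TP p / real (NP p)))"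
    by (simp add: vsC P1_eq_def mult_ac)
  also have "\<dots> = kin p * 1" by (simp only: e1 e2)
  finally show "vs p * P1_eq p = kin p" by simp
  show "kp p * (kin p * TP p / real (NP p)) = kin p" using G by (simp add: kp_def)
  show "kr p * (kin p * TR p / real (NR p)) = kin p" using G by (simp add: kr_def)
  show "Ve p (epo_eq p) = vs p" by (simp add: Ve_Vf vs_def epo_eq_def us_def)
  show "epo_eq p 1 = us p" by (simp add: epo_eq_def us_def)
qed

lemma hh_eq: "NP p div 2 = hh p" by (simp add: hh_def)

lemma field_at_eq:
  assumes g: "good p" and j: "j < state_dim p"
  shows "epo_field p (epo_eq p) j = 0"
proof -
  note G = good_facts[OF g] and P = basic_pos[OF g] and I = eq_identities[OF g]
  have NPh: "hh p + 1 \<le> NP p" "hh p \<ge> 1" using G(17,18) by auto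
  have L: "epo_field p (epo_eq p) j = lin_b p j + (lin_g0 p j + lin_g1 p j * vs p) * epo_eq p (j - 1)
           - (lin_d0 p j + lin_d1 p j * vs p) * epo_eq p j" if "2 \<le> j" using field_lin[OF g that j] I(4) by simp
  consider "j = 0" | "j = 1" | "j = 2" | "j = 3" | "4 \<le> j" "j \<le> 2 + hh p" | "j = 3 + hh p" | "4 + hh p \<le> j" "j \<le> 2 + NP p"
    | "j = 3 + NP p" | "4 + NP p \<le> j" "j \<le> 2 + NP p + NR p"
    using j NPh by (force simp: state_dim_def)
  then show ?thesis
  proof cases
    case 1 then show ?thesis by (simp add: epo_field_def epo_eq_def)
  next
    case 2
    have "Vmax p - kepo p \<noteq> 0" "KM p \<noteq> 0" "V1 p \<noteq> 0" "Vmax p \<noteq> 0" using G by auto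
    then show ?thesis using 2 by (simp add: epo_field_def epo_eq_def A2_eq_def field_simps)
  next
    case 3 then show ?thesis using L G by (simp add: lin_b_def lin_g0_def lin_g1_def lin_d0_def lin_d1_def epo_eq_def)
  next
    case 4
    have f: "3 \<le> 2 + NP p div 2" using NPh by (simp add: hh_eq)
    show ?thesis using L[of] 4 f I(1) by (simp add: lin_b_def lin_g0_def lin_g1_def lin_d0_def lin_d1_def epo_eq_def hh_eq del: One_nat_def)
  next
    case 5
    have f: "j - 1 \<noteq> 0" "j - 1 \<noteq> 1" "j - 1 \<noteq> 2" "j - 1 \<le> 2 + NP p div 2" "j \<le> 2 + NP p div 2" "j \<noteq> 2" "j \<noteq> 3"
      "j \<noteq> 0" "j \<noteq> 1" using 5 by (auto simp: hh_eq)
    show ?thesis using L 5 f by (simp add: lin_b_def lin_g0_def lin_g1_def lin_d0_def lin_d1_def epo_eq_def hh_eq del: One_nat_def)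
  next
    case 6
    have f: "j - 1 \<noteq> 0" "j - 1 \<noteq> 1" "j - 1 \<noteq> 2" "j - 1 \<le> 2 + NP p div 2" "\<not> j \<le> 2 + NP p div 2" "j \<le> 2 + NP p"
      "j \<noteq> 2" "j \<noteq> 3" "j \<noteq> 0" "j \<noteq> 1" "j \<le> 3 + hh p" "\<not> j \<le> 2 + hh p" using 6 NPh by (auto simp: hh_eq)
    have two: "2 \<le> j" using 6 by simp
    show ?thesis using L[OF two] f I(1,2) by (simp add: lin_b_def lin_g0_def lin_g1_def lin_d0_def lin_d1_def epo_eq_def hh_eq del: One_nat_def)
  next
    case 7
    have f: "j - 1 \<noteq> 0" "j - 1 \<noteq> 1" "j - 1 \<noteq> 2" "\<not> j - 1 \<le> 2 + NP p div 2" "j - 1 \<le> 2 + NP p" "\<not> j \<le> 2 + NP p div 2" "j \<le> 2 + NP p"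
      "j \<noteq> 2" "j \<noteq> 3" "j \<noteq> 0" "j \<noteq> 1" "\<not> j \<le> 3 + hh p" "\<not> j \<le> 2 + hh p" "j \<le> 3 + NP p" using 7 NPh by (auto simp: hh_eq)
    show ?thesis using L 7 f by (simp add: lin_b_def lin_g0_def lin_g1_def lin_d0_def lin_d1_def epo_eq_def hh_eq del: One_nat_def)
  next
    case 8
    have f: "j - 1 \<noteq> 0" "j - 1 \<noteq> 1" "j - 1 \<noteq> 2" "\<not> j - 1 \<le> 2 + NP p div 2" "j - 1 \<le> 2 + NP p" "\<not> j \<le> 2 + NP p div 2" "\<not> j \<le> 2 + NP p"
      "j \<le> 2 + NP p + NR p"
      "j \<noteq> 2" "j \<noteq> 3" "j \<noteq> 0" "j \<noteq> 1" "\<not> j \<le> 3 + hh p" "\<not> j \<le> 2 + hh p" "j \<le> 3 + NP p" using 8 NPh G(14) by (auto simp: hh_eq)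
    have two: "2 \<le> j" using 8 by simp
    show ?thesis using L[OF two] f I(2,3) by (simp add: lin_b_def lin_g0_def lin_g1_def lin_d0_def lin_d1_def epo_eq_def hh_eq del: One_nat_def)
  next
    case 9
    have f: "j - 1 \<noteq> 0" "j - 1 \<noteq> 1" "j - 1 \<noteq> 2" "\<not> j - 1 \<le> 2 + NP p div 2" "\<not> j - 1 \<le> 2 + NP p" "\<not> j \<le> 2 + NP p div 2" "\<not> j \<le> 2 + NP p"
      "j \<le> 2 + NP p + NR p" "j - 1 \<le> 2 + NP p + NR p"
      "j \<noteq> 2" "j \<noteq> 3" "j \<noteq> 0" "j \<noteq> 1" "\<not> j \<le> 3 + hh p" "\<not> j \<le> 2 + hh p" "\<not> j \<le> 3 + NP p" using 9 NPh by (auto simp: hh_eq)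
    show ?thesis using L 9 f by (simp add: lin_b_def lin_g0_def lin_g1_def lin_d0_def lin_d1_def epo_eq_def hh_eq del: One_nat_def)
  qed
qed

lemma field_A2:
  assumes g: "good p" and e: "\<bar>x 1 - us p\<bar> < KK p"
  shows "epo_field p x 1 = - cc p * (x 1 - us p) / (KK p + (x 1 - us p))"
proof -
  note G = good_facts[OF g] and P = basic_pos[OF g]
  define e where "e = x 1 - us p"
  have pos: "KK p + e > 0" using e by (auto simp: e_def)
  have D: "KM p + x 1 / V1 p = (KK p + e) / V1 p" using G by (simp add: KK_def e_def field_simps)
  have F0: "epo_field p x 1 = kepo p - (Vmax p * x 1 / V1 p) / (KM p + x 1 / V1 p)"
    by (simp add: epo_field_def)
  have "(Vmax p * x 1 / V1 p) / (KM p + x 1 / V1 p) = Vmax p * x 1 / (KK p + e)"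
    unfolding D using G pos by (simp add: field_simps)
  then have F: "epo_field p x 1 = kepo p - Vmax p * x 1 / (KK p + e)" using F0 by simp
  have cu: "cc p * us p = kepo p * V1 p * KM p" using G by (simp add: cc_def us_def A2_eq_def)
  have num: "kepo p * (KK p + e) - Vmax p * x 1 = - cc p * e"
    using cu by (simp add: KK_def e_def cc_def algebra_simps)
  have "kepo p - Vmax p * x 1 / (KK p + e) = (kepo p * (KK p + e) - Vmax p * x 1) / (KK p + e)"
    using pos by (simp add: field_simps)
  then show ?thesis using F num by (simp add: e_def)
qed

definition dev :: "epo_par \<Rightarrow> (nat \<Rightarrow> real) \<Rightarrow> nat \<Rightarrow> real" where
  "dev p x j = x j - epo_eq p j"
definition Phi :: "epo_par \<Rightarrow> nat \<Rightarrow> (nat \<Rightarrow> real) \<Rightarrow> real" where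
  "Phi p j x = (if j \<le> 1 then 0 else LL p * (\<bar>dev p x 1\<bar> + \<bar>dev p x (j - 1)\<bar>))"

lemma Est_bound: assumes g: "good p" shows "\<bar>epo_eq p j\<bar> \<le> Est p"
proof -
  note G = good_facts[OF g] and P = basic_pos[OF g]
  have a: "k23 p / k32 p * us p \<ge> 0" "kin p * TP p / real (NP p) \<ge> 0" "kin p * TR p / real (NR p) \<ge> 0"
    using G P by auto
  show ?thesis using a P by (auto simp: epo_eq_def Est_def us_def[symmetric])
qed

lemma coef_bounds:
  assumes g: "good p" and j: "2 \<le> j" and v: "vs p / 2 \<le> v" "v \<le> 2 * vs p"
  shows "lin_g1 p j = 0 \<or> lin_g1 p j = 1" "lin_d1 p j = 0 \<or> lin_d1 p j = 1"
    "\<bar>lin_g0 p j + lin_g1 p j * v\<bar> \<le> gmax p" "lin_d0 p j + lin_d1 p j * v \<ge> dd p"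
proof -
  note G = good_facts[OF g] and P = basic_pos[OF g]
  show "lin_g1 p j = 0 \<or> lin_g1 p j = 1" by (simp add: lin_g1_def)
  show "lin_d1 p j = 0 \<or> lin_d1 p j = 1" by (simp add: lin_d1_def)
  have v0: "v \<ge> 0" using v P by linarith
  show "\<bar>lin_g0 p j + lin_g1 p j * v\<bar> \<le> gmax p"
    using G P v v0 by (auto simp: lin_g0_def lin_g1_def gmax_def)
  have "dd p \<le> k32 p" "dd p \<le> vs p / 2" "dd p \<le> kp p" "dd p \<le> kr p" by (auto simp: dd_def)
  then show "lin_d0 p j + lin_d1 p j * v \<ge> dd p"
    using v by (auto simp: lin_d0_def lin_d1_def)
qed



lemma abs3: "\<bar>a + b - c\<bar> \<le> \<bar>a\<bar> + \<bar>b\<bar> + \<bar>c\<bar>" for a b c :: real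
  by arith

lemma main_ineq:
  assumes g: "good p" and x1: "\<bar>x 1 - us p\<bar> \<le> rho p" and j: "j < state_dim p"
  shows "dev p x j * epo_field p x j \<le> \<bar>dev p x j\<bar> * Phi p j x - dd p * (dev p x j)\<^sup>2"
proof -
  note G = good_facts[OF g] and P = basic_pos[OF g] and I = eq_identities[OF g]
  consider "j = 0" | "j = 1" | "2 \<le> j" by linarith
  then show ?thesis
  proof cases
    case 1
    have "dd p \<le> ka p" by (simp add: dd_def)
    then have "ka p * (x 0)\<^sup>2 \<ge> dd p * (x 0)\<^sup>2" by (intro mult_right_mono) auto
    then show ?thesis using 1 by (simp add: dev_def Phi_def epo_eq_def epo_field_def power2_eq_square mult_ac)
  next
    case 2
    define e where "e = x 1 - us p"
    have e: "\<bar>e\<bar> \<le> KK p / 2" using x1 by (auto simp: e_def rho_def)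
    have F: "epo_field p x 1 = - cc p * e / (KK p + e)" using field_A2[OF g, of x] e P by (simp add: e_def)
    have pos: "KK p + e > 0" "KK p + e \<le> 2 * KK p" using e P by (auto simp: abs_le_iff)
    have "cc p / (2 * KK p) \<le> cc p / (KK p + e)" using pos P by (intro divide_left_mono) auto
    moreover have "dd p \<le> cc p / (2 * KK p)" by (simp add: dd_def)
    ultimately have "dd p * e\<^sup>2 \<le> cc p / (KK p + e) * e\<^sup>2" by (intro mult_right_mono) auto
    moreover have "e * epo_field p x 1 = - (cc p / (KK p + e) * e\<^sup>2)"
      unfolding F by (simp add: power2_eq_square)
    ultimately have "e * epo_field p x 1 \<le> - dd p * e\<^sup>2" by linarith
    then show ?thesis using 2 I(5) by (simp add: dev_def Phi_def e_def)
  next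
    case 3
    define v where "v = Ve p x"
    define w where "w = vs p"
    define E where "E = epo_eq p"
    have vn: "vs p / 2 \<le> v" "v \<le> 2 * vs p" "\<bar>v - w\<bar> \<le> Lv p * \<bar>x 1 - us p\<bar>"
      using Vf_near[OF g x1] by (auto simp: v_def w_def Ve_Vf)
    note cb = coef_bounds[OF g 3 vn(1,2)]
    define g1 where "g1 = lin_g1 p j"
    define d1 where "d1 = lin_d1 p j"
    define gv where "gv = lin_g0 p j + g1 * v"
    define Dv where "Dv = lin_d0 p j + d1 * v"
    define y where "y = x j - E j"
    define z where "z = x (j - 1) - E (j - 1)"
    define F where "F = gv * z + g1 * (v - w) * E (j - 1) - d1 * (v - w) * E j"
    have fx: "epo_field p x j = lin_b p j + gv * x (j - 1) - Dv * x j"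
      using field_lin[OF g 3 j, of x] by (simp add: gv_def Dv_def g1_def d1_def v_def)
    have fe: "lin_b p j + (lin_g0 p j + g1 * w) * E (j - 1) - (lin_d0 p j + d1 * w) * E j = 0"
      using field_lin[OF g 3 j, of "epo_eq p"] field_at_eq[OF g j] I(4) by (simp add: g1_def d1_def w_def E_def)
    have key: "epo_field p x j = F - Dv * y"
    proof -
      have "epo_field p x j - (F - Dv * y) = lin_b p j + (lin_g0 p j + g1 * w) * E (j - 1) - (lin_d0 p j + d1 * w) * E j"
        unfolding fx F_def y_def z_def gv_def Dv_def by (simp add: algebra_simps)
      then show ?thesis using fe by simp
    qed
    have g1b: "\<bar>g1\<bar> \<le> 1" "\<bar>d1\<bar> \<le> 1" using cb(1,2) by (auto simp: g1_def d1_def)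
    have Eb: "\<bar>E (j - 1)\<bar> \<le> Est p" "\<bar>E j\<bar> \<le> Est p" using Est_bound[OF g] by (auto simp: E_def)
    have t1: "\<bar>gv * z\<bar> \<le> gmax p * \<bar>z\<bar>" using cb(3) by (simp add: abs_mult gv_def g1_def mult_right_mono)
    have t2: "\<bar>g1 * (v - w) * E (j - 1)\<bar> \<le> \<bar>v - w\<bar> * Est p"
    proof -
      have "\<bar>g1 * (v - w) * E (j - 1)\<bar> = \<bar>g1\<bar> * (\<bar>v - w\<bar> * \<bar>E (j - 1)\<bar>)" by (simp add: abs_mult)
      also have "\<dots> \<le> 1 * (\<bar>v - w\<bar> * Est p)" using g1b Eb by (intro mult_mono) (auto intro: mult_left_mono)
      finally show ?thesis by simp
    qed
    have t3: "\<bar>d1 * (v - w) * E j\<bar> \<le> \<bar>v - w\<bar> * Est p"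
    proof -
      have "\<bar>d1 * (v - w) * E j\<bar> = \<bar>d1\<bar> * (\<bar>v - w\<bar> * \<bar>E j\<bar>)" by (simp add: abs_mult)
      also have "\<dots> \<le> 1 * (\<bar>v - w\<bar> * Est p)" using g1b Eb by (intro mult_mono) (auto intro: mult_left_mono)
      finally show ?thesis by simp
    qed
    have "\<bar>F\<bar> \<le> gmax p * \<bar>z\<bar> + 2 * Est p * \<bar>v - w\<bar>"
      unfolding F_def using t1 t2 t3 abs3[of "gv * z" "g1 * (v - w) * E (j - 1)" "d1 * (v - w) * E j"]
        mult.commute[of "\<bar>v - w\<bar>" "Est p"] by linarith
    also have "2 * Est p * \<bar>v - w\<bar> \<le> 2 * Est p * (Lv p * \<bar>x 1 - us p\<bar>)"
      using vn(3) P by (intro mult_left_mono) auto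
    finally have Fb: "\<bar>F\<bar> \<le> gmax p * \<bar>z\<bar> + 2 * Lv p * Est p * \<bar>dev p x 1\<bar>"
      using I(5) by (simp add: dev_def mult_ac)
    have "gmax p * \<bar>z\<bar> + 2 * Lv p * Est p * \<bar>dev p x 1\<bar> \<le> LL p * (\<bar>dev p x 1\<bar> + \<bar>z\<bar>)"
    proof -
      have "gmax p * \<bar>z\<bar> \<le> LL p * \<bar>z\<bar>" using P by (intro mult_right_mono) (auto simp: LL_def)
      moreover have "2 * Lv p * Est p * \<bar>dev p x 1\<bar> \<le> LL p * \<bar>dev p x 1\<bar>"
        using P by (intro mult_right_mono) (auto simp: LL_def)
      ultimately show ?thesis by (simp add: distrib_left)
    qed
    with Fb have Fb2: "\<bar>F\<bar> \<le> Phi p j x" using 3 by (simp add: Phi_def z_def E_def dev_def)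
    have Dv: "Dv \<ge> dd p" using cb(4) by (simp add: Dv_def d1_def)
    have h1: "y * epo_field p x j = y * F - Dv * y\<^sup>2" by (simp add: key algebra_simps power2_eq_square)
    have "y * F \<le> \<bar>y * F\<bar>" by (rule abs_ge_self)
    also have "\<dots> = \<bar>y\<bar> * \<bar>F\<bar>" by (rule abs_mult)
    also have "\<dots> \<le> \<bar>y\<bar> * Phi p j x" using Fb2 by (intro mult_left_mono) auto
    finally have h2: "y * F \<le> \<bar>y\<bar> * Phi p j x" .
    have h3: "Dv * y\<^sup>2 \<ge> dd p * y\<^sup>2" using Dv by (intro mult_right_mono) auto
    from h1 h2 h3 have "y * epo_field p x j \<le> \<bar>y\<bar> * Phi p j x - dd p * y\<^sup>2" by linarith
    then show ?thesis by (simp add: y_def E_def dev_def)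
  qed
qed

lemma sol_dev_deriv:
  assumes "is_solution n f I x" "i < n" "t \<in> I"
  shows "((\<lambda>s. x s i - c) has_real_derivative f (x t) i) (at t within I)"
proof -
  have "((\<lambda>s. x s i) has_real_derivative f (x t) i) (at t within I)"
    using assms by (auto simp: is_solution_def)
  then show ?thesis using DERIV_diff[OF _ DERIV_const, of "\<lambda>s. x s i" _ t I c] by simp
qed

primrec Kb :: "epo_par \<Rightarrow> nat \<Rightarrow> real" where
  "Kb p 0 = 1"
| "Kb p (Suc j) = max 1 (LL p * (1 + Kb p j) / dd p)"

lemma Kb_ge1: "Kb p j \<ge> 1" by (cases j) auto

lemma n_ge: "good p \<Longrightarrow> 2 < state_dim p"
  using good_facts(12) by (auto simp: state_dim_def)

lemma core_bounds:
  assumes g: "good p" and sol: "is_solution (state_dim p) (epo_field p) {0..<T} x"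
    and init: "\<forall>i<state_dim p. \<bar>x 0 i - epo_eq p i\<bar> \<le> \<delta>" and dr: "\<delta> < rho p"
  shows "\<forall>t\<in>{0..<T}. \<bar>x t 1 - us p\<bar> \<le> \<delta>"
    "\<forall>t\<in>{0..<T}. \<forall>i<state_dim p. \<bar>x t i - epo_eq p i\<bar> \<le> Kb p i * \<delta>"
proof -
  note P = basic_pos[OF g] and I = eq_identities[OF g]
  have n2: "2 < state_dim p" by (rule n_ge[OF g])
  have d0: "0 \<le> \<delta>" using init n2 by (meson abs_ge_zero order_trans zero_less_numeral less_trans)
  have init1: "\<bar>x 0 1 - us p\<bar> \<le> \<delta>" using init[rule_format, of 1] n2 I(5) by simp
  have tr: "\<forall>t\<in>{0..<T}. \<bar>x t 1 - us p\<bar> \<le> \<bar>x 0 1 - us p\<bar>"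
  proof (rule scalar_trap[of T "\<lambda>t. x t 1 - us p" "\<lambda>t. epo_field p (x t) 1" "rho p"])
    fix t assume t: "t \<in> {0..<T}"
    show "((\<lambda>t. x t 1 - us p) has_real_derivative epo_field p (x t) 1) (at t within {0..<T})"
      using sol_dev_deriv[OF sol _ t] n2 by simp
    assume "\<bar>x t 1 - us p\<bar> < rho p"
    then have "dev p (x t) 1 * epo_field p (x t) 1 \<le> \<bar>dev p (x t) 1\<bar> * Phi p 1 (x t) - dd p * (dev p (x t) 1)\<^sup>2"
      using main_ineq[OF g, of "x t" 1] n2 by simp
    then show "(x t 1 - us p) * epo_field p (x t) 1 \<le> 0"
      using P I(5) by (simp add: dev_def Phi_def) (smt (verit) mult_nonneg_nonneg zero_le_power2)
  next
    show "\<bar>x 0 1 - us p\<bar> < rho p" using init1 dr by simp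
  qed
  show b1: "\<forall>t\<in>{0..<T}. \<bar>x t 1 - us p\<bar> \<le> \<delta>" using tr init1 by fastforce
  have near: "\<And>t. t \<in> {0..<T} \<Longrightarrow> \<bar>x t 1 - us p\<bar> \<le> rho p" using b1 dr by fastforce
  have "\<forall>t\<in>{0..<T}. \<bar>x t i - epo_eq p i\<bar> \<le> Kb p i * \<delta>" if "i < state_dim p" for i
    using that
  proof (induction i rule: less_induct)
    case (less i)
    consider "i = 0" | "i = 1" | "2 \<le> i" by linarith
    then show ?case
    proof cases
      case 1
      have "\<forall>t\<in>{0..<T}. \<bar>x t i - epo_eq p i\<bar> \<le> max \<bar>x 0 i - epo_eq p i\<bar> (0 / dd p)"
      proof (rule scalar_bound[of T _ "\<lambda>t. epo_field p (x t) i"])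
        fix t assume t: "t \<in> {0..<T}"
        show "((\<lambda>t. x t i - epo_eq p i) has_real_derivative epo_field p (x t) i) (at t within {0..<T})"
          using sol_dev_deriv[OF sol less.prems t] .
        show "(x t i - epo_eq p i) * epo_field p (x t) i \<le> \<bar>x t i - epo_eq p i\<bar> * 0 - dd p * (x t i - epo_eq p i)\<^sup>2"
          using main_ineq[OF g, of "x t", OF near[OF t] less.prems] 1 by (simp add: dev_def Phi_def)
      qed (use P in auto)
      then show ?thesis using init less.prems 1 by fastforce
    next
      case 2
      then show ?thesis using b1 I(5) Kb_ge1[of p 1] d0
        by (metis mult_1 mult_right_mono order_trans)
    next
      case 3
      define \<Phi> where "\<Phi> = LL p * (\<delta> + Kb p (i - 1) * \<delta>)"
      have IH: "\<forall>t\<in>{0..<T}. \<bar>x t (i - 1) - epo_eq p (i - 1)\<bar> \<le> Kb p (i - 1) * \<delta>"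
        using less.IH[of "i - 1"] less.prems 3 by simp
      have Phi0: "\<Phi> \<ge> 0" using P d0 Kb_ge1[of p "i - 1"] by (simp add: \<Phi>_def)
      have "\<forall>t\<in>{0..<T}. \<bar>x t i - epo_eq p i\<bar> \<le> max \<bar>x 0 i - epo_eq p i\<bar> (\<Phi> / dd p)"
      proof (rule scalar_bound[of T _ "\<lambda>t. epo_field p (x t) i"])
        fix t assume t: "t \<in> {0..<T}"
        show "((\<lambda>t. x t i - epo_eq p i) has_real_derivative epo_field p (x t) i) (at t within {0..<T})"
          using sol_dev_deriv[OF sol less.prems t] .
        have "Phi p i (x t) \<le> \<Phi>"
        proof -
          have "\<bar>dev p (x t) 1\<bar> + \<bar>dev p (x t) (i - 1)\<bar> \<le> \<delta> + Kb p (i - 1) * \<delta>"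
            using b1 t IH I(5) by (force simp: dev_def intro: add_mono)
          then show ?thesis using 3 P by (simp add: Phi_def \<Phi>_def mult_left_mono)
        qed
        then have "\<bar>x t i - epo_eq p i\<bar> * Phi p i (x t) \<le> \<bar>x t i - epo_eq p i\<bar> * \<Phi>"
          by (intro mult_left_mono) auto
        then show "(x t i - epo_eq p i) * epo_field p (x t) i \<le> \<bar>x t i - epo_eq p i\<bar> * \<Phi> - dd p * (x t i - epo_eq p i)\<^sup>2"
          using main_ineq[OF g, of "x t", OF near[OF t] less.prems] by (simp add: dev_def)
      qed (use P Phi0 in auto)
      moreover have "max \<bar>x 0 i - epo_eq p i\<bar> (\<Phi> / dd p) \<le> Kb p i * \<delta>"
      proof -
        obtain k where k: "i = Suc k" using 3 by (cases i) auto
        have e1: "\<Phi> / dd p = LL p * (1 + Kb p k) / dd p * \<delta>" using k by (simp add: \<Phi>_def algebra_simps)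
        have c2: "\<bar>x 0 i - epo_eq p i\<bar> \<le> \<delta>" using init less.prems by simp
        have c3: "LL p * (1 + Kb p k) / dd p * \<delta> \<le> Kb p i * \<delta>" using k d0 by (intro mult_right_mono) auto
        have c4: "1 * \<delta> \<le> Kb p i * \<delta>" using k d0 by (intro mult_right_mono) auto
        have "\<Phi> / dd p \<le> Kb p i * \<delta>" by (subst e1) (rule c3)
        moreover have "\<bar>x 0 i - epo_eq p i\<bar> \<le> Kb p i * \<delta>" using c2 c4 by linarith
        ultimately show ?thesis by (rule max.boundedI[rotated])
      qed
      ultimately show ?thesis by force
    qed
  qed
  then show "\<forall>t\<in>{0..<T}. \<forall>i<state_dim p. \<bar>x t i - epo_eq p i\<bar> \<le> Kb p i * \<delta>" by blast
qed

primrec chainf :: "(nat \<Rightarrow> (real \<Rightarrow> real) \<Rightarrow> real \<Rightarrow> real) \<Rightarrow> (real \<Rightarrow> real) \<Rightarrow> nat \<Rightarrow> real \<Rightarrow> real" where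
  "chainf G y 0 = y"
| "chainf G y (Suc k) = G k (chainf G y k)"

lemma existence:
  assumes g: "good p" and x01: "\<bar>x0 1 - us p\<bar> < rho p"
  shows "\<exists>x. is_solution (state_dim p) (epo_field p) {0..} x \<and> (\<forall>i<state_dim p. x 0 i = x0 i)"
proof -
  note G = good_facts[OF g] and P = basic_pos[OF g] and I = eq_identities[OF g]
  have "\<bar>x0 1 - us p\<bar> < KK p" using x01 P by (auto simp: rho_def)
  then obtain e where e0: "e 0 = x0 1 - us p"
    and e: "\<And>t. t \<ge> 0 \<Longrightarrow> (e has_real_derivative (- cc p * e t / (KK p + e t))) (at t within {0..})"
            "\<And>t. t \<ge> 0 \<Longrightarrow> \<bar>e t\<bar> \<le> \<bar>x0 1 - us p\<bar>"
    using mm_exists[of "KK p" "cc p" "x0 1 - us p"] P by blast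
  define u where "u t = us p + e t" for t
  have du: "\<And>t. t \<ge> 0 \<Longrightarrow> (u has_real_derivative (- cc p * e t / (KK p + e t))) (at t within {0..})"
    unfolding u_def using e(1) by (auto intro!: derivative_eq_intros)
  have cu: "continuous_on {0..} u" by (rule DERIV_continuous_on[OF du]) auto
  have unear: "\<And>t. t \<ge> 0 \<Longrightarrow> \<bar>u t - us p\<bar> \<le> rho p" using e(2) x01 by (force simp: u_def)
  define v where "v t = Vf p (u t)" for t
  have cv: "continuous_on {0..} v"
  proof -
    have "\<forall>t\<in>{0..}. SC50 p + (BSL p + u t / V1 p) \<noteq> 0"
    proof
      fix t :: real assume "t \<in> {0..}"
      then have "BSL p + u t / V1 p > 0" using Vf_near(1)[OF g unear] by auto
      then show "SC50 p + (BSL p + u t / V1 p) \<noteq> 0" using G(11) by linarith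
    qed
    then show ?thesis unfolding v_def Vf_def using G(5) by (intro continuous_intros cu) auto
  qed
  define G' where "G' k z = (SOME w. w 0 = x0 (k + 2) \<and> (\<forall>t\<ge>0. (w has_real_derivative
      (lin_b p (k + 2) + (lin_g0 p (k + 2) + lin_g1 p (k + 2) * v t) * z t
        - (lin_d0 p (k + 2) + lin_d1 p (k + 2) * v t) * w t)) (at t within {0..})))" for k and z :: "real \<Rightarrow> real"
  have Gspec: "G' k z 0 = x0 (k + 2) \<and> (\<forall>t\<ge>0. (G' k z has_real_derivative
      (lin_b p (k + 2) + (lin_g0 p (k + 2) + lin_g1 p (k + 2) * v t) * z t
        - (lin_d0 p (k + 2) + lin_d1 p (k + 2) * v t) * G' k z t)) (at t within {0..}))"
    if cz: "continuous_on {0..} z" for k z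
  proof -
    have "\<exists>w. w 0 = x0 (k + 2) \<and> (\<forall>t\<ge>0. (w has_real_derivative
      (lin_b p (k + 2) + (lin_g0 p (k + 2) + lin_g1 p (k + 2) * v t) * z t
        - (lin_d0 p (k + 2) + lin_d1 p (k + 2) * v t) * w t)) (at t within {0..}))"
      by (rule lin_exists) (intro continuous_intros cz cv)+
    then show ?thesis unfolding G'_def by (rule someI_ex)
  qed
  have chain_cont: "continuous_on {0..} (chainf G' u k)" for k
  proof (induction k)
    case 0 then show ?case using cu by simp
  next
    case (Suc k)
    from Gspec[OF Suc] show ?case
      by (auto intro!: DERIV_continuous_on[where D="\<lambda>t. lin_b p (k + 2) + (lin_g0 p (k + 2) + lin_g1 p (k + 2) * v t) * chainf G' u k t
        - (lin_d0 p (k + 2) + lin_d1 p (k + 2) * v t) * G' k (chainf G' u k) t"])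
  qed
  define x where "x t i = (if i = 0 then x0 0 * exp (- ka p * t) else chainf G' u (i - 1) t)" for t i
  have x1: "x t 1 = u t" for t by (simp add: x_def)
  have x1': "x t (Suc 0) = u t" for t by (simp add: x_def)
  have init: "\<forall>i<state_dim p. x 0 i = x0 i"
  proof (intro allI impI)
    fix i assume "i < state_dim p"
    consider "i = 0" | "i = 1" | k where "i = k + 2" by (metis One_nat_def add_2_eq_Suc' not0_implies_Suc)
    then show "x 0 i = x0 i"
    proof cases
      case 3
      then have "x 0 i = G' k (chainf G' u k) 0" by (simp add: x_def)
      then show ?thesis using Gspec[OF chain_cont[of k]] 3 by simp
    qed (auto simp: x_def u_def e0)
  qed
  have sol: "is_solution (state_dim p) (epo_field p) {0..} x"
    unfolding is_solution_def
  proof (intro allI impI ballI)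
    fix i :: nat and t :: real assume i: "i < state_dim p" and t: "t \<in> {0..}"
    then have t0: "t \<ge> 0" by simp
    consider "i = 0" | "i = 1" | k where "i = k + 2" by (metis One_nat_def add_2_eq_Suc' not0_implies_Suc)
    then show "((\<lambda>s. x s i) has_real_derivative epo_field p (x t) i) (at t within {0..})"
    proof cases
      case 1
      have "((\<lambda>s. x0 0 * exp (- ka p * s)) has_real_derivative - ka p * (x0 0 * exp (- ka p * t))) (at t within {0..})"
        by (auto intro!: derivative_eq_intros)
      then show ?thesis using 1 by (simp add: x_def epo_field_def)
    next
      case 2
      have "\<bar>x t 1 - us p\<bar> < KK p" using unear[OF t0] P x1 by (auto simp: rho_def)
      then have "epo_field p (x t) 1 = - cc p * e t / (KK p + e t)" using field_A2[OF g] x1 by (simp add: u_def)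
      moreover have "(\<lambda>s. x s 1) = u" using x1 by (intro ext) (metis One_nat_def)
      ultimately show ?thesis using du[OF t0] 2 by simp
    next
      case 3
      have xi: "(\<lambda>s. x s i) = G' k (chainf G' u k)" using 3 by (auto simp: x_def)
      have xim: "x t (i - 1) = chainf G' u k t" using 3 by (simp add: x_def)
      have vt: "Ve p (x t) = v t" by (simp add: Ve_Vf v_def x1')
      have "epo_field p (x t) i = lin_b p i + (lin_g0 p i + lin_g1 p i * v t) * chainf G' u k t
          - (lin_d0 p i + lin_d1 p i * v t) * G' k (chainf G' u k) t"
        using field_lin[OF g _ i, of "x t"] 3 vt xim xi by (simp add: fun_eq_iff)
      then show ?thesis using Gspec[OF chain_cont[of k]] t0 xi 3 by simp
    qed
  qed
  show ?thesis using sol init by blast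
qed

lemma distn_L2: "distn n x y = L2_set (\<lambda>i. x i - y i) {..<n}"
  by (simp add: distn_def L2_set_def)

lemma distn_le_sum: "distn n x y \<le> (\<Sum>i<n. \<bar>x i - y i\<bar>)"
  unfolding distn_L2 by (rule L2_set_le_sum_abs)

lemma comp_le_distn: assumes "i < n" shows "\<bar>x i - y i\<bar> \<le> distn n x y"
proof -
  have "(x i - y i)\<^sup>2 \<le> (\<Sum>j<n. (x j - y j)\<^sup>2)"
    using assms by (intro member_le_sum) auto
  then have "sqrt ((x i - y i)\<^sup>2) \<le> sqrt (\<Sum>j<n. (x j - y j)\<^sup>2)" by (rule real_sqrt_le_mono)
  then show ?thesis by (simp add: distn_def)
qed

lemma sol_restrict:
  assumes "is_solution n f {0..} x" "T > 0"
  shows "is_solution n f {0..<T} x"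
  unfolding is_solution_def
proof (intro allI impI ballI)
  fix i t assume i: "i < n" and t: "t \<in> {0..<T}"
  then have "((\<lambda>s. x s i) has_real_derivative f (x t) i) (at t within {0..})"
    using assms(1) by (auto simp: is_solution_def)
  then show "((\<lambda>s. x s i) has_real_derivative f (x t) i) (at t within {0..<T})"
    by (rule DERIV_subset) auto
qed

theorem main_result:
  assumes g: "good p"
  shows "loc_asym_stable (state_dim p) (epo_field p) (epo_eq p)"
proof -
  note P = basic_pos[OF g] and I = eq_identities[OF g]
  define n where "n = state_dim p"
  define e where "e = epo_eq p"
  have n2: "2 < n" using n_ge[OF g] by (simp add: n_def)
  define KB where "KB = (\<Sum>i<n. Kb p i)"
  have KB0: "KB \<ge> 0" unfolding KB_def using Kb_ge1 by (intro sum_nonneg) (meson order_trans zero_le_one)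
  have part1: "\<forall>i<n. epo_field p e i = 0" using field_at_eq[OF g] by (simp add: n_def e_def)
  have part2: "\<forall>\<epsilon>>0. \<exists>\<delta>>0. \<forall>x0. distn n x0 e < \<delta> \<longrightarrow>
        (\<exists>x. is_solution n (epo_field p) {0..} x \<and> (\<forall>i<n. x 0 i = x0 i)) \<and>
        (\<forall>T>0. \<forall>x. is_solution n (epo_field p) {0..<T} x \<and> (\<forall>i<n. x 0 i = x0 i) \<longrightarrow>
           (\<forall>t\<in>{0..<T}. distn n (x t) e < \<epsilon>))"
  proof (intro allI impI)
    fix \<epsilon> :: real assume eps: "\<epsilon> > 0"
    define \<delta> where "\<delta> = min (rho p) (\<epsilon> / (KB + 1))"
    have d: "\<delta> > 0" "\<delta> \<le> rho p" "\<delta> \<le> \<epsilon> / (KB + 1)" using P eps KB0 by (auto simp: \<delta>_def)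
    show "\<exists>\<delta>>0. \<forall>x0. distn n x0 e < \<delta> \<longrightarrow>
        (\<exists>x. is_solution n (epo_field p) {0..} x \<and> (\<forall>i<n. x 0 i = x0 i)) \<and>
        (\<forall>T>0. \<forall>x. is_solution n (epo_field p) {0..<T} x \<and> (\<forall>i<n. x 0 i = x0 i) \<longrightarrow>
           (\<forall>t\<in>{0..<T}. distn n (x t) e < \<epsilon>))"
    proof (intro exI[of _ \<delta>] conjI allI impI d(1))
      fix x0 assume x0: "distn n x0 e < \<delta>"
      have c1: "\<bar>x0 1 - us p\<bar> < rho p" using comp_le_distn[of 1 n x0 e] n2 x0 d I(5) by (simp add: e_def)
      show "\<exists>x. is_solution n (epo_field p) {0..} x \<and> (\<forall>i<n. x 0 i = x0 i)"
        using existence[OF g, of x0, OF c1] by (simp add: n_def)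
      fix T :: real and x assume T: "T > 0" and xs: "is_solution n (epo_field p) {0..<T} x \<and> (\<forall>i<n. x 0 i = x0 i)"
      define \<delta>' where "\<delta>' = distn n x0 e"
      have init: "\<forall>i<state_dim p. \<bar>x 0 i - epo_eq p i\<bar> \<le> \<delta>'"
        using xs comp_le_distn by (auto simp: \<delta>'_def n_def e_def)
      have dr: "\<delta>' < rho p" using x0 d by (simp add: \<delta>'_def)
      have B: "\<forall>t\<in>{0..<T}. \<forall>i<state_dim p. \<bar>x t i - epo_eq p i\<bar> \<le> Kb p i * \<delta>'"
      proof -
        have solx: "is_solution (state_dim p) (epo_field p) {0..<T} x" using xs by (simp add: n_def)
        show ?thesis using core_bounds(2)[OF g solx init dr] .
      qed
      show "\<forall>t\<in>{0..<T}. distn n (x t) e < \<epsilon>"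
      proof
        fix t assume t: "t \<in> {0..<T}"
        have "distn n (x t) e \<le> (\<Sum>i<n. \<bar>x t i - e i\<bar>)" by (rule distn_le_sum)
        also have "\<dots> \<le> (\<Sum>i<n. Kb p i * \<delta>')" using B t by (intro sum_mono) (auto simp: n_def e_def)
        also have "\<dots> = KB * \<delta>'" by (simp add: KB_def sum_distrib_right)
        also have "\<dots> \<le> KB * \<delta>" using KB0 x0 by (intro mult_left_mono) (auto simp: \<delta>'_def)
        also have "\<dots> \<le> KB * (\<epsilon> / (KB + 1))" using KB0 d by (intro mult_left_mono) auto
        also have "\<dots> < \<epsilon>" using KB0 eps by (simp add: field_simps)
        finally show "distn n (x t) e < \<epsilon>" .
      qed
    qed
  qed
  have part3: "\<exists>\<delta>>0. \<forall>x. is_solution n (epo_field p) {0..} x \<and> distn n (x 0) e < \<delta> \<longrightarrow>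
        ((\<lambda>t. distn n (x t) e) \<longlongrightarrow> 0) at_top"
  proof (intro exI[of _ "rho p"] conjI allI impI P)
    fix x assume xs: "is_solution n (epo_field p) {0..} x \<and> distn n (x 0) e < rho p"
    define \<delta>' where "\<delta>' = distn n (x 0) e"
    have init: "\<forall>i<state_dim p. \<bar>x 0 i - epo_eq p i\<bar> \<le> \<delta>'"
      using comp_le_distn by (auto simp: \<delta>'_def n_def e_def)
    have dr: "\<delta>' < rho p" using xs by (simp add: \<delta>'_def)
    have solT: "is_solution (state_dim p) (epo_field p) {0..<T} x" if "T > 0" for T
      using sol_restrict[of n _ x T] xs that by (simp add: n_def)
    have near: "\<bar>x t 1 - us p\<bar> \<le> rho p" if "t \<ge> 0" for t
      using core_bounds(1)[OF g solT[of "t + 1"] init dr] that dr by force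
    have bnd: "\<bar>x t i - epo_eq p i\<bar> \<le> Kb p i * \<delta>'" if "t \<ge> 0" "i < n" for t i
      using core_bounds(2)[OF g solT[of "t + 1"] init dr] that by (force simp: n_def)
    have dec: "((\<lambda>t. x t i - epo_eq p i) \<longlongrightarrow> 0) at_top" if "i < n" for i
      using that
    proof (induction i rule: less_induct)
      case (less i)
      have Phil: "((\<lambda>t. Phi p i (x t)) \<longlongrightarrow> 0) at_top"
      proof (cases "i \<le> 1")
        case True then show ?thesis by (simp add: Phi_def)
      next
        case False
        have l1: "((\<lambda>t. x t 1 - epo_eq p 1) \<longlongrightarrow> 0) at_top" using less.IH[of 1] less.prems False by simp
        have l2: "((\<lambda>t. x t (i - 1) - epo_eq p (i - 1)) \<longlongrightarrow> 0) at_top" using less.IH[of "i - 1"] less.prems False by simp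
        have "((\<lambda>t. LL p * (\<bar>x t 1 - epo_eq p 1\<bar> + \<bar>x t (i - 1) - epo_eq p (i - 1)\<bar>)) \<longlongrightarrow> LL p * (\<bar>0\<bar> + \<bar>0\<bar>)) at_top"
          by (intro tendsto_intros l1 l2)
        then show ?thesis using False by (simp add: Phi_def dev_def)
      qed
      show ?case
      proof (rule scalar_decay[of "\<lambda>t. x t i - epo_eq p i" "\<lambda>t. epo_field p (x t) i" "\<lambda>t. Phi p i (x t)" "dd p" "Kb p i * \<delta>'"])
        fix t :: real assume t: "t \<ge> 0"
        show "((\<lambda>t. x t i - epo_eq p i) has_real_derivative epo_field p (x t) i) (at t within {0..})"
          using sol_dev_deriv[of n _ "{0..}" x i t] xs less.prems t by simp
        show "(x t i - epo_eq p i) * epo_field p (x t) i \<le> \<bar>x t i - epo_eq p i\<bar> * Phi p i (x t) - dd p * (x t i - epo_eq p i)\<^sup>2"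
          using main_ineq[OF g, of "x t", OF near[OF t]] less.prems by (simp add: dev_def n_def)
        show "\<bar>x t i - epo_eq p i\<bar> \<le> Kb p i * \<delta>'" using bnd[OF t less.prems] .
      next
        fix t show "Phi p i (x t) \<ge> 0" using P by (simp add: Phi_def)
      qed (use P Phil in auto)
    qed
    have "((\<lambda>t. sqrt (\<Sum>i<n. (x t i - e i)\<^sup>2)) \<longlongrightarrow> sqrt (\<Sum>i<n. 0\<^sup>2)) at_top"
      using dec by (intro tendsto_intros) (auto simp: e_def)
    then show "((\<lambda>t. distn n (x t) e) \<longlongrightarrow> 0) at_top" by (simp add: distn_def)
  qed
  show ?thesis unfolding loc_asym_stable_def using part1 part2 part3 by (simp add: n_def e_def)
qed


theorem proposition5p1:
  fixes p :: epo_par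
  assumes "ka p > 0" "kepo p > 0" "Vmax p > 0" "KM p > 0" "V1 p > 0"
    "k23 p > 0" "k32 p > 0" "BSL p > 0" "kin p > 0" "Smax p > 0"
    "SC50 p > 0" "NP p > 0" "TP p > 0" "NR p > 0" "TR p > 0"
    "Vmax p > kepo p" "even (NP p)"
  shows "loc_asym_stable (state_dim p) (epo_field p) (epo_eq p)"
proof (rule main_result)
  show "good p" unfolding good_def using assms by auto
qed

end
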